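(* Let $B$ be a skew left brace and let $I/J$ be a chief factor of $B$ which is an abelian brace. Then $I/J$ is either a Frattini chief factor or a complemented chief factor of $B$. If moreover $B$ is finite, then every complement of $I/J$ in $B/J$ is a maximal subbrace of $B/J$.
   Context: A skew left brace (brace) is a set $B$ with two group structures $(B,+)$ and $(B,\cdot)$ with $a(b+c)=ab-a+ac$; $\lambda_a(b)=-a+ab$. A subbrace is a subset that is a subgroup of both groups; a maximal subbrace is a proper subbrace not contained in any other proper subbrace. An ideal is a subset that is a normal subgroup of both groups and $\lambda_b$-invariant for all $b$. A brace is abelian if $xy=x+y=y+x$ for all elements. For ideals $J\subseteq I$, $I/J$ is a chief factor if it is a minimal nonzero ideal of $B/J$. The Frattini subbrace $\Phi(B)$ is the intersection of all maximal subbraces of $B$ (or $B$ if there are none). $I/J$ is a Frattini chief factor if $I/J\subseteq\Phi(B/J)$, and a complemented chief factor if there is a subbrace $T$ of $B/J$ (a complement) with $B/J=(I/J)T=(I/J)+T$ and $(I/J)\cap T=0$. *)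

theory Defs
  imports "HOL-Algebra.Group" "HOL-Algebra.Coset"
begin

record 'a brace = "'a monoid" +
  add :: "'a \<Rightarrow> 'a \<Rightarrow> 'a"
  zero :: 'a

definition add_group :: "('a, 'b) brace_scheme \<Rightarrow> 'a monoid" where
  "add_group B = \<lparr>carrier = carrier B, mult = add B, one = zero B\<rparr>"

definition add_inv :: "('a, 'b) brace_scheme \<Rightarrow> 'a \<Rightarrow> 'a" where
  "add_inv B a = inv\<^bsub>add_group B\<^esub> a"

definition skew_brace :: "('a, 'b) brace_scheme \<Rightarrow> bool" where
  "skew_brace B \<longleftrightarrow> group B \<and> group (add_group B) \<and>
     (\<forall>a\<in>carrier B. \<forall>b\<in>carrier B. \<forall>c\<in>carrier B.
        mult B a (add B b c) = add B (add B (mult B a b) (add_inv B a)) (mult B a c))"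

definition lam :: "('a, 'b) brace_scheme \<Rightarrow> 'a \<Rightarrow> 'a \<Rightarrow> 'a" where
  "lam B a b = add B (add_inv B a) (mult B a b)"

definition subbrace :: "('a, 'b) brace_scheme \<Rightarrow> 'a set \<Rightarrow> bool" where
  "subbrace B S \<longleftrightarrow> subgroup S B \<and> subgroup S (add_group B)"

definition maximal_subbrace :: "('a, 'b) brace_scheme \<Rightarrow> 'a set \<Rightarrow> bool" where
  "maximal_subbrace B M \<longleftrightarrow> subbrace B M \<and> M \<noteq> carrier B \<and>
     (\<forall>S. subbrace B S \<and> M \<subseteq> S \<and> S \<noteq> carrier B \<longrightarrow> S = M)"

text \<open>Intersection of all maximal subbraces; equals the carrier if there are none.\<close>
definition frattini :: "('a, 'b) brace_scheme \<Rightarrow> 'a set" where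
  "frattini B = carrier B \<inter> \<Inter>{M. maximal_subbrace B M}"

definition brace_ideal :: "('a, 'b) brace_scheme \<Rightarrow> 'a set \<Rightarrow> bool" where
  "brace_ideal B I \<longleftrightarrow> normal I B \<and> normal I (add_group B) \<and>
     (\<forall>b\<in>carrier B. \<forall>x\<in>I. lam B b x \<in> I)"

definition abelian_brace :: "('a, 'b) brace_scheme \<Rightarrow> bool" where
  "abelian_brace B \<longleftrightarrow> (\<forall>x\<in>carrier B. \<forall>y\<in>carrier B.
     mult B x y = add B x y \<and> add B x y = add B y x)"

definition set_add :: "('a, 'b) brace_scheme \<Rightarrow> 'a set \<Rightarrow> 'a set \<Rightarrow> 'a set" where
  "set_add B X Y = {add B x y | x y. x \<in> X \<and> y \<in> Y}"

definition set_mult :: "('a, 'b) brace_scheme \<Rightarrow> 'a set \<Rightarrow> 'a set \<Rightarrow> 'a set" where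
  "set_mult B X Y = {mult B x y | x y. x \<in> X \<and> y \<in> Y}"

text \<open>Quotient brace B/J (J an ideal): elements are the additive cosets a + J
(which coincide with the multiplicative cosets aJ); operations are the
induced set-wise operations.\<close>
definition qcoset :: "('a, 'b) brace_scheme \<Rightarrow> 'a set \<Rightarrow> 'a \<Rightarrow> 'a set" where
  "qcoset B J a = {add B a j | j. j \<in> J}"

definition quotient_brace :: "('a, 'b) brace_scheme \<Rightarrow> 'a set \<Rightarrow> 'a set brace" where
  "quotient_brace B J = \<lparr>carrier = qcoset B J ` carrier B,
     mult = set_mult B, one = J, add = set_add B, zero = J\<rparr>"

definition qsub :: "('a, 'b) brace_scheme \<Rightarrow> 'a set \<Rightarrow> 'a set \<Rightarrow> 'a set set" where
  "qsub B I J = qcoset B J ` I"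

definition chief_factor :: "('a, 'b) brace_scheme \<Rightarrow> 'a set \<Rightarrow> 'a set \<Rightarrow> bool" where
  "chief_factor B I J \<longleftrightarrow> brace_ideal B I \<and> brace_ideal B J \<and> J \<subseteq> I \<and>
     brace_ideal (quotient_brace B J) (qsub B I J) \<and>
     qsub B I J \<noteq> {zero (quotient_brace B J)} \<and>
     (\<forall>K. brace_ideal (quotient_brace B J) K \<and> K \<subseteq> qsub B I J \<and>
          K \<noteq> {zero (quotient_brace B J)} \<longrightarrow> K = qsub B I J)"

definition frattini_chief_factor :: "('a, 'b) brace_scheme \<Rightarrow> 'a set \<Rightarrow> 'a set \<Rightarrow> bool" where
  "frattini_chief_factor B I J \<longleftrightarrow> chief_factor B I J \<and>
     qsub B I J \<subseteq> frattini (quotient_brace B J)"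

definition is_complement :: "('a, 'b) brace_scheme \<Rightarrow> 'a set \<Rightarrow> 'a set \<Rightarrow> 'a set set \<Rightarrow> bool" where
  "is_complement B I J T \<longleftrightarrow> subbrace (quotient_brace B J) T \<and>
     carrier (quotient_brace B J) = set_mult (quotient_brace B J) (qsub B I J) T \<and>
     carrier (quotient_brace B J) = set_add (quotient_brace B J) (qsub B I J) T \<and>
     qsub B I J \<inter> T = {zero (quotient_brace B J)}"

definition complemented_chief_factor :: "('a, 'b) brace_scheme \<Rightarrow> 'a set \<Rightarrow> 'a set \<Rightarrow> bool" where
  "complemented_chief_factor B I J \<longleftrightarrow> chief_factor B I J \<and> (\<exists>T. is_complement B I J T)"

end

theory Submission
  imports Defs "HOL-Algebra.SndIsomorphismGrp"
begin

lemma ag_simps[simp]: "carrier (add_group C) = carrier C" "mult (add_group C) = add C"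
  "one (add_group C) = zero C"
  by (simp_all add: add_group_def)

lemma set_mult_coset: "Defs.set_mult C X Y = X <#>\<^bsub>C\<^esub> Y"
  unfolding Defs.set_mult_def Coset.set_mult_def by auto

lemma set_add_coset: "set_add C X Y = X <#>\<^bsub>add_group C\<^esub> Y"
  unfolding set_add_def Coset.set_mult_def by auto

locale sb =
  fixes C :: "('a,'b) brace_scheme" (structure)
  assumes sbr: "skew_brace C"
begin

abbreviation ad (infixl "\<oplus>" 65) where "x \<oplus> y \<equiv> add C x y"
abbreviation ng ("\<ominus> _" [80] 80) where "\<ominus> x \<equiv> add_inv C x"
abbreviation zr ("\<zero>") where "\<zero> \<equiv> zero C"

sublocale G: group C using sbr skew_brace_def by auto
sublocale A: group "add_group C" using sbr skew_brace_def by auto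

lemma a_closed[simp]: "x \<in> carrier C \<Longrightarrow> y \<in> carrier C \<Longrightarrow> x \<oplus> y \<in> carrier C"
  using A.m_closed[of x y] by simp
lemma n_closed[simp]: "x \<in> carrier C \<Longrightarrow> \<ominus> x \<in> carrier C"
  using A.inv_closed[of x] by (simp add: add_inv_def)
lemma z_closed[simp]: "\<zero> \<in> carrier C" using A.one_closed by simp
lemma a_assoc[simp]: "x \<in> carrier C \<Longrightarrow> y \<in> carrier C \<Longrightarrow> z \<in> carrier C \<Longrightarrow> x \<oplus> y \<oplus> z = x \<oplus> (y \<oplus> z)"
  using A.m_assoc[of x y z] by simp
lemma a_lz[simp]: "x \<in> carrier C \<Longrightarrow> \<zero> \<oplus> x = x" using A.l_one[of x] by simp
lemma a_rz[simp]: "x \<in> carrier C \<Longrightarrow> x \<oplus> \<zero> = x" using A.r_one[of x] by simp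
lemma a_linv[simp]: "x \<in> carrier C \<Longrightarrow> \<ominus> x \<oplus> x = \<zero>" using A.l_inv[of x] by (simp add: add_inv_def)
lemma a_rinv[simp]: "x \<in> carrier C \<Longrightarrow> x \<oplus> \<ominus> x = \<zero>" using A.r_inv[of x] by (simp add: add_inv_def)
lemma a_linv2[simp]: "x \<in> carrier C \<Longrightarrow> y \<in> carrier C \<Longrightarrow> \<ominus> x \<oplus> (x \<oplus> y) = y"
  using a_assoc[of "\<ominus> x" x y] by simp
lemma a_rinv2[simp]: "x \<in> carrier C \<Longrightarrow> y \<in> carrier C \<Longrightarrow> x \<oplus> (\<ominus> x \<oplus> y) = y"
  using a_assoc[of x "\<ominus> x" y] by simp
lemma n_add[simp]: "x \<in> carrier C \<Longrightarrow> y \<in> carrier C \<Longrightarrow> \<ominus> (x \<oplus> y) = \<ominus> y \<oplus> \<ominus> x"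
  using A.inv_mult_group[of x y] by (simp add: add_inv_def)
lemma n_n[simp]: "x \<in> carrier C \<Longrightarrow> \<ominus> \<ominus> x = x"
  using A.inv_inv[of x] by (simp add: add_inv_def)
lemma n_zero[simp]: "\<ominus> \<zero> = \<zero>"
  using A.inv_one by (simp add: add_inv_def)
lemma a_solve: "y \<in> carrier C \<Longrightarrow> z \<in> carrier C \<Longrightarrow> w \<in> carrier C \<Longrightarrow> (y \<oplus> z = w) = (z = \<ominus> y \<oplus> w)"
  by auto

lemma law: "a \<in> carrier C \<Longrightarrow> b \<in> carrier C \<Longrightarrow> c \<in> carrier C \<Longrightarrow>
   a \<otimes> (b \<oplus> c) = a \<otimes> b \<oplus> \<ominus> a \<oplus> a \<otimes> c"
  using sbr unfolding skew_brace_def by blast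

lemma one_eq_zero: "\<one> = \<zero>"
proof -
  have "\<one> \<otimes> (\<zero> \<oplus> \<zero>) = \<one> \<otimes> \<zero> \<oplus> \<ominus> \<one> \<oplus> \<one> \<otimes> \<zero>" by (rule law) auto
  then have "\<ominus> \<one> = \<zero>" by simp
  then have "\<ominus> \<ominus> \<one> = \<ominus> \<zero>" by simp
  then show ?thesis by simp
qed

lemma mult_zero[simp]: "a \<in> carrier C \<Longrightarrow> a \<otimes> \<zero> = a"
  using one_eq_zero by (metis G.r_one)

lemma mult_neg: "a \<in> carrier C \<Longrightarrow> b \<in> carrier C \<Longrightarrow> a \<otimes> \<ominus> b = a \<oplus> \<ominus> (a \<otimes> b) \<oplus> a"
proof -
  assume a: "a \<in> carrier C" and b: "b \<in> carrier C"
  have "a \<otimes> (b \<oplus> \<ominus> b) = a \<otimes> b \<oplus> \<ominus> a \<oplus> a \<otimes> \<ominus> b" using a b by (intro law) auto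
  then have "a \<otimes> b \<oplus> (\<ominus> a \<oplus> a \<otimes> \<ominus> b) = a" using a b by simp
  then have "\<ominus> a \<oplus> a \<otimes> \<ominus> b = \<ominus> (a \<otimes> b) \<oplus> a" using a b by (subst (asm) a_solve) auto
  then have "a \<otimes> \<ominus> b = a \<oplus> (\<ominus> (a \<otimes> b) \<oplus> a)" using a b by (subst (asm) a_solve) auto
  then show ?thesis using a b by simp
qed

lemma lam_closed[simp]: "a \<in> carrier C \<Longrightarrow> x \<in> carrier C \<Longrightarrow> lam C a x \<in> carrier C"
  by (simp add: lam_def)

lemma lam_comp: "a \<in> carrier C \<Longrightarrow> b \<in> carrier C \<Longrightarrow> c \<in> carrier C \<Longrightarrow>
  lam C a (lam C b c) = lam C (a \<otimes> b) c"
  unfolding lam_def by (simp add: law mult_neg G.m_assoc)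

lemma lam_one: "c \<in> carrier C \<Longrightarrow> lam C \<one> c = c"
  unfolding lam_def by (simp add: one_eq_zero)

lemma mult_lam: "a \<in> carrier C \<Longrightarrow> x \<in> carrier C \<Longrightarrow> a \<oplus> lam C a x = a \<otimes> x"
  unfolding lam_def by simp

lemma mult_eq_add: "a \<in> carrier C \<Longrightarrow> y \<in> carrier C \<Longrightarrow> a \<otimes> lam C (inv a) y = a \<oplus> y"
proof -
  assume a: "a \<in> carrier C" and y: "y \<in> carrier C"
  have "a \<otimes> lam C (inv a) y = a \<oplus> lam C a (lam C (inv a) y)" using a y by (simp add: mult_lam)
  also have "\<dots> = a \<oplus> y" using a y by (simp add: lam_comp lam_one)
  finally show ?thesis .
qed


lemma sub_facts:
  assumes "subbrace C S"
  shows "S \<subseteq> carrier C" "\<And>x y. x \<in> S \<Longrightarrow> y \<in> S \<Longrightarrow> x \<oplus> y \<in> S"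
    "\<And>x. x \<in> S \<Longrightarrow> \<ominus> x \<in> S" "\<zero> \<in> S"
    "\<And>x y. x \<in> S \<Longrightarrow> y \<in> S \<Longrightarrow> x \<otimes> y \<in> S"
    "\<And>x. x \<in> S \<Longrightarrow> inv x \<in> S"
proof -
  have s1: "subgroup S C" and s2: "subgroup S (add_group C)" using assms subbrace_def by auto
  show "S \<subseteq> carrier C" using subgroup.subset[OF s1] .
  show "\<And>x y. x \<in> S \<Longrightarrow> y \<in> S \<Longrightarrow> x \<oplus> y \<in> S" using subgroup.m_closed[OF s2] by simp
  show "\<And>x. x \<in> S \<Longrightarrow> \<ominus> x \<in> S" using subgroup.m_inv_closed[OF s2] by (simp add: add_inv_def)
  show "\<zero> \<in> S" using subgroup.one_closed[OF s2] by simp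
  show "\<And>x y. x \<in> S \<Longrightarrow> y \<in> S \<Longrightarrow> x \<otimes> y \<in> S" using subgroup.m_closed[OF s1] by simp
  show "\<And>x. x \<in> S \<Longrightarrow> inv x \<in> S" using subgroup.m_inv_closed[OF s1] by simp
qed

lemma sub_lam: "subbrace C S \<Longrightarrow> s \<in> S \<Longrightarrow> x \<in> S \<Longrightarrow> lam C s x \<in> S"
  unfolding lam_def by (intro sub_facts(2,3,5)) auto

lemma ideal_sub: "brace_ideal C N \<Longrightarrow> subbrace C N"
  unfolding brace_ideal_def subbrace_def by (auto dest: normal_imp_subgroup)

lemma id_mconj: "brace_ideal C N \<Longrightarrow> x \<in> carrier C \<Longrightarrow> h \<in> N \<Longrightarrow> x \<otimes> h \<otimes> inv x \<in> N"
proof -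
  assume N: "brace_ideal C N" and x: "x \<in> carrier C" and h: "h \<in> N"
  have "N \<lhd> C" using N brace_ideal_def by auto
  then show ?thesis using x h G.normal_inv_iff[of N] by auto
qed

lemma id_aconj: "brace_ideal C N \<Longrightarrow> x \<in> carrier C \<Longrightarrow> h \<in> N \<Longrightarrow> x \<oplus> (h \<oplus> \<ominus> x) \<in> N"
proof -
  assume N: "brace_ideal C N" and x: "x \<in> carrier C" and h: "h \<in> N"
  have hc: "h \<in> carrier C" using sub_facts(1)[OF ideal_sub[OF N]] h by blast
  have "normal N (add_group C)" using N brace_ideal_def by auto
  then have "x \<oplus> h \<oplus> \<ominus> x \<in> N" using A.normal_inv_iff x h by (simp add: add_inv_def)
  then show ?thesis using x hc by simp
qed

lemma id_lam: "brace_ideal C N \<Longrightarrow> b \<in> carrier C \<Longrightarrow> x \<in> N \<Longrightarrow> lam C b x \<in> N"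
  unfolding brace_ideal_def by blast

lemma add_eq_mult:
  assumes N: "brace_ideal C N" and S: "subbrace C S"
  shows "set_add C N S = Defs.set_mult C N S"
proof
  note Nf = sub_facts[OF ideal_sub[OF N]] and Sf = sub_facts[OF S]
  show "set_add C N S \<subseteq> Defs.set_mult C N S"
  proof
    fix x assume "x \<in> set_add C N S"
    then obtain n s where n: "n \<in> N" and s: "s \<in> S" and x: "x = n \<oplus> s" unfolding set_add_def by auto
    have nc: "n \<in> carrier C" and sc: "s \<in> carrier C" using n s Nf Sf by auto
    define n1 where "n1 = \<ominus> s \<oplus> (n \<oplus> s)"
    have n1: "n1 \<in> N" using id_aconj[OF N, of "\<ominus> s" n] n nc sc by (simp add: n1_def)
    have n1c: "n1 \<in> carrier C" using n1 Nf by auto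
    have e1: "x = s \<oplus> n1" using x nc sc by (simp add: n1_def)
    define n2 where "n2 = lam C (inv s) n1"
    have n2: "n2 \<in> N" using id_lam[OF N] n1 sc by (simp add: n2_def)
    have n2c: "n2 \<in> carrier C" using n2 Nf by auto
    have e2: "x = s \<otimes> n2" using e1 mult_eq_add[OF sc n1c] by (simp add: n2_def)
    define n3 where "n3 = s \<otimes> n2 \<otimes> inv s"
    have n3: "n3 \<in> N" using id_mconj[OF N sc n2] by (simp add: n3_def)
    have "x = n3 \<otimes> s" using e2 sc n2c by (simp add: n3_def G.m_assoc)
    then show "x \<in> Defs.set_mult C N S" using n3 s unfolding Defs.set_mult_def by blast
  qed
  show "Defs.set_mult C N S \<subseteq> set_add C N S"
  proof
    fix x assume "x \<in> Defs.set_mult C N S"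
    then obtain n s where n: "n \<in> N" and s: "s \<in> S" and x: "x = n \<otimes> s" unfolding Defs.set_mult_def by auto
    have nc: "n \<in> carrier C" and sc: "s \<in> carrier C" using n s Nf Sf by auto
    define y where "y = inv s \<otimes> n \<otimes> s"
    have y: "y \<in> N" using id_mconj[OF N, of "inv s" n] n sc by (simp add: y_def)
    have yc: "y \<in> carrier C" using y Nf by auto
    have e1: "x = s \<otimes> y" using x nc sc by (simp add: y_def G.m_assoc[symmetric])
    define z where "z = lam C s y"
    have z: "z \<in> N" using id_lam[OF N sc y] by (simp add: z_def)
    have zc: "z \<in> carrier C" using z Nf by auto
    have e2: "x = s \<oplus> z" using e1 mult_lam[OF sc yc] by (simp add: z_def)
    define w where "w = s \<oplus> (z \<oplus> \<ominus> s)"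
    have w: "w \<in> N" using id_aconj[OF N sc z] by (simp add: w_def)
    have "x = w \<oplus> s" using e2 sc zc by (simp add: w_def)
    then show "x \<in> set_add C N S" using w s unfolding set_add_def by blast
  qed
qed


lemma sum_subbrace:
  assumes N: "brace_ideal C N" and S: "subbrace C S"
  shows "subbrace C (set_add C N S)"
proof -
  have n1: "N \<lhd> C" and n2: "N \<lhd> add_group C" using N brace_ideal_def by auto
  have s1: "subgroup S C" and s2: "subgroup S (add_group C)" using S subbrace_def by auto
  have "second_isomorphism_grp N (add_group C) S"
    unfolding second_isomorphism_grp_def second_isomorphism_grp_axioms_def using n2 s2 by auto
  then have a: "subgroup (N <#>\<^bsub>add_group C\<^esub> S) (add_group C)"
    by (rule second_isomorphism_grp.normal_set_mult_subgroup)
  have "second_isomorphism_grp N C S"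
    unfolding second_isomorphism_grp_def second_isomorphism_grp_axioms_def using n1 s1 by auto
  then have m: "subgroup (N <#>\<^bsub>C\<^esub> S) C"
    by (rule second_isomorphism_grp.normal_set_mult_subgroup)
  show ?thesis unfolding subbrace_def
    using a m add_eq_mult[OF N S] by (simp add: set_add_coset set_mult_coset)
qed

lemma int_ideal:
  assumes N: "brace_ideal C N" and S: "subbrace C S" and cs: "carrier C = set_add C N S"
    and ab: "\<forall>x\<in>N. \<forall>y\<in>N. x \<otimes> y = x \<oplus> y \<and> x \<oplus> y = y \<oplus> x"
  shows "brace_ideal C (N \<inter> S)"
proof -
  note Nf = sub_facts[OF ideal_sub[OF N]] and Sf = sub_facts[OF S]
  have s1: "subgroup (N \<inter> S) C" and s2: "subgroup (N \<inter> S) (add_group C)"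
    using ideal_sub[OF N] S unfolding subbrace_def
    by (auto intro: G.subgroups_Inter_pair A.subgroups_Inter_pair)
  have cm: "carrier C = Defs.set_mult C N S" using cs add_eq_mult[OF N S] by simp
  have "N \<inter> S \<lhd> C"
  proof -
    have "c \<otimes> h \<otimes> inv c \<in> N \<inter> S" if c: "c \<in> carrier C" and h: "h \<in> N \<inter> S" for c h
    proof -
      obtain n s where n: "n \<in> N" and s: "s \<in> S" and cns: "c = n \<otimes> s"
        using c cm unfolding Defs.set_mult_def by auto
      have nc: "n \<in> carrier C" and sc: "s \<in> carrier C" and hc: "h \<in> carrier C" using n s h Nf Sf by auto
      define y where "y = s \<otimes> h \<otimes> inv s"
      have yN: "y \<in> N" using id_mconj[OF N sc] h by (simp add: y_def)
      have yS: "y \<in> S" using h s Sf(5,6) by (simp add: y_def)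
      have yc: "y \<in> carrier C" using yN Nf by auto
      have comm: "n \<otimes> y = y \<otimes> n" using ab n yN by metis
      have "c \<otimes> h \<otimes> inv c = n \<otimes> y \<otimes> inv n" using nc sc hc
        by (simp add: cns y_def G.m_assoc G.inv_mult_group)
      also have "\<dots> = y" using comm nc yc by (simp add: G.m_assoc)
      finally show ?thesis using yN yS by simp
    qed
    then show ?thesis using s1 G.normal_inv_iff by blast
  qed
  moreover have "N \<inter> S \<lhd> add_group C"
  proof -
    have "c \<oplus> h \<oplus> \<ominus> c \<in> N \<inter> S" if c: "c \<in> carrier C" and h: "h \<in> N \<inter> S" for c h
    proof -
      obtain n s where n: "n \<in> N" and s: "s \<in> S" and cns: "c = n \<oplus> s"
        using c cs unfolding set_add_def by auto
      have nc: "n \<in> carrier C" and sc: "s \<in> carrier C" and hc: "h \<in> carrier C" using n s h Nf Sf by auto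
      define y where "y = s \<oplus> (h \<oplus> \<ominus> s)"
      have yN: "y \<in> N" using id_aconj[OF N sc] h by (simp add: y_def)
      have yS: "y \<in> S" using h s Sf(2,3) by (simp add: y_def)
      have yc: "y \<in> carrier C" using yN Nf by auto
      have comm: "n \<oplus> y = y \<oplus> n" using ab n yN by metis
      have "c \<oplus> h \<oplus> \<ominus> c = n \<oplus> y \<oplus> \<ominus> n" using nc sc hc
        by (simp add: cns y_def)
      also have "\<dots> = y" using comm nc yc by simp
      finally show ?thesis using yN yS by simp
    qed
    then show ?thesis using s2 A.normal_inv_iff by (simp add: add_inv_def)
  qed
  moreover have "lam C c h \<in> N \<inter> S" if c: "c \<in> carrier C" and h: "h \<in> N \<inter> S" for c h
  proof -
    obtain n s where n: "n \<in> N" and s: "s \<in> S" and cns: "c = n \<otimes> s"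
      using c cm unfolding Defs.set_mult_def by auto
    have nc: "n \<in> carrier C" and sc: "s \<in> carrier C" and hc: "h \<in> carrier C" using n s h Nf Sf by auto
    define y where "y = lam C s h"
    have yN: "y \<in> N" using id_lam[OF N sc] h by (simp add: y_def)
    have yS: "y \<in> S" using sub_lam[OF S s] h by (simp add: y_def)
    have yc: "y \<in> carrier C" using yN Nf by auto
    have "lam C c h = lam C n y" using nc sc hc by (simp add: cns y_def lam_comp)
    also have "\<dots> = \<ominus> n \<oplus> (n \<oplus> y)" unfolding lam_def using ab n yN by metis
    also have "\<dots> = y" using nc yc by simp
    finally show ?thesis using yN yS by simp
  qed
  ultimately show ?thesis unfolding brace_ideal_def by blast
qed


lemma set_add_sub: "X \<subseteq> carrier C \<Longrightarrow> Y \<subseteq> carrier C \<Longrightarrow> set_add C X Y \<subseteq> carrier C"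
  unfolding set_add_def by (auto intro!: a_closed)

theorem main_abs1:
  assumes N: "brace_ideal C N" and nz: "N \<noteq> {\<zero>}"
    and minl: "\<forall>K. brace_ideal C K \<and> K \<subseteq> N \<and> K \<noteq> {\<zero>} \<longrightarrow> K = N"
    and ab: "\<forall>x\<in>N. \<forall>y\<in>N. x \<otimes> y = x \<oplus> y \<and> x \<oplus> y = y \<oplus> x"
  shows "N \<subseteq> frattini C \<or> (\<exists>T. subbrace C T \<and> carrier C = Defs.set_mult C N T \<and>
           carrier C = set_add C N T \<and> N \<inter> T = {\<zero>})"
proof (cases "\<forall>M. maximal_subbrace C M \<longrightarrow> N \<subseteq> M")
  case True
  have "N \<subseteq> carrier C" using sub_facts(1)[OF ideal_sub[OF N]] .
  then show ?thesis using True unfolding frattini_def by blast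
next
  case False
  then obtain M where M: "maximal_subbrace C M" and nM: "\<not> N \<subseteq> M" by blast
  have Ms: "subbrace C M" using M maximal_subbrace_def by auto
  note Nf = sub_facts[OF ideal_sub[OF N]] and Mf = sub_facts[OF Ms]
  let ?S = "set_add C N M"
  have Ss: "subbrace C ?S" using sum_subbrace[OF N Ms] .
  have MS: "M \<subseteq> ?S"
  proof
    fix m assume m: "m \<in> M"
    then have "m = \<zero> \<oplus> m" using Mf by auto
    then show "m \<in> ?S" using m Nf unfolding set_add_def by blast
  qed
  have NS: "N \<subseteq> ?S"
  proof
    fix m assume m: "m \<in> N"
    then have "m = m \<oplus> \<zero>" using Nf by auto
    then show "m \<in> ?S" using m Mf unfolding set_add_def by blast
  qed
  have "?S = carrier C"
  proof (rule ccontr)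
    assume "?S \<noteq> carrier C"
    then have "?S = M" using M Ss MS unfolding maximal_subbrace_def by blast
    then show False using NS nM by blast
  qed
  then have cs: "carrier C = ?S" by simp
  have K: "brace_ideal C (N \<inter> M)" using int_ideal[OF N Ms cs ab] .
  have "N \<inter> M = {\<zero>}"
  proof (rule ccontr)
    assume "N \<inter> M \<noteq> {\<zero>}"
    then have "N \<inter> M = N" using minl K by blast
    then show False using nM by blast
  qed
  then show ?thesis using Ms cs add_eq_mult[OF N Ms] by auto
qed

theorem main_abs2:
  assumes N: "brace_ideal C N" and nz: "N \<noteq> {\<zero>}"
    and minl: "\<forall>K. brace_ideal C K \<and> K \<subseteq> N \<and> K \<noteq> {\<zero>} \<longrightarrow> K = N"
    and ab: "\<forall>x\<in>N. \<forall>y\<in>N. x \<otimes> y = x \<oplus> y \<and> x \<oplus> y = y \<oplus> x"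
    and T: "subbrace C T" and cT: "carrier C = set_add C N T" and NT: "N \<inter> T = {\<zero>}"
  shows "maximal_subbrace C T"
proof -
  note Nf = sub_facts[OF ideal_sub[OF N]] and Tf = sub_facts[OF T]
  have "T \<noteq> carrier C"
  proof
    assume "T = carrier C"
    then have "N \<inter> T = N" using Nf by blast
    then show False using NT nz by simp
  qed
  moreover have "S = T" if S: "subbrace C S" and TS: "T \<subseteq> S" and Sc: "S \<noteq> carrier C" for S
  proof -
    note Sf = sub_facts[OF S]
    have "set_add C N T \<subseteq> set_add C N S" using TS unfolding set_add_def by blast
    moreover have "set_add C N S \<subseteq> carrier C" using set_add_sub Nf(1) Sf(1) by blast
    ultimately have cs: "carrier C = set_add C N S" using cT by blast
    have K: "brace_ideal C (N \<inter> S)" using int_ideal[OF N S cs ab] .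
    have NS0: "N \<inter> S = {\<zero>}"
    proof (rule ccontr)
      assume "N \<inter> S \<noteq> {\<zero>}"
      then have "N \<inter> S = N" using minl K by blast
      then have "N \<subseteq> S" by blast
      then have "set_add C N S \<subseteq> S" using Sf(2) unfolding set_add_def by blast
      then show False using cs Sc Sf(1) by blast
    qed
    have "S \<subseteq> T"
    proof
      fix s assume s: "s \<in> S"
      then have "s \<in> set_add C N T" using cT Sf(1) by blast
      then obtain n t where n: "n \<in> N" and t: "t \<in> T" and e: "s = n \<oplus> t" unfolding set_add_def by auto
      have nc: "n \<in> carrier C" and tc: "t \<in> carrier C" using n t Nf Tf by auto
      have "n = s \<oplus> \<ominus> t" using e nc tc by simp
      then have "n \<in> S" using s t TS Sf(2,3) by auto
      then have "n = \<zero>" using NS0 n by blast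
      then show "s \<in> T" using e t tc by simp
    qed
    then show ?thesis using TS by blast
  qed
  ultimately show ?thesis using T unfolding maximal_subbrace_def by blast
qed


context
  fixes J assumes J: "brace_ideal C J"
begin

lemma Jf: "J \<subseteq> carrier C" "\<And>x y. x \<in> J \<Longrightarrow> y \<in> J \<Longrightarrow> x \<oplus> y \<in> J"
    "\<And>x. x \<in> J \<Longrightarrow> \<ominus> x \<in> J" "\<zero> \<in> J"
    "\<And>x y. x \<in> J \<Longrightarrow> y \<in> J \<Longrightarrow> x \<otimes> y \<in> J"
    "\<And>x. x \<in> J \<Longrightarrow> inv x \<in> J"
  using sub_facts[OF ideal_sub[OF J]] by auto

lemma qc_mult: "a \<in> carrier C \<Longrightarrow> qcoset C J a = {a \<otimes> j | j. j \<in> J}"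
proof
  assume a: "a \<in> carrier C"
  show "qcoset C J a \<subseteq> {a \<otimes> j | j. j \<in> J}"
  proof
    fix x assume "x \<in> qcoset C J a"
    then obtain j where j: "j \<in> J" and x: "x = a \<oplus> j" unfolding qcoset_def by auto
    have "x = a \<otimes> lam C (inv a) j" using mult_eq_add[OF a, of j] j Jf x by auto
    moreover have "lam C (inv a) j \<in> J" using id_lam[OF J, of "inv a" j] a j by auto
    ultimately show "x \<in> {a \<otimes> j | j. j \<in> J}" by blast
  qed
  show "{a \<otimes> j | j. j \<in> J} \<subseteq> qcoset C J a"
  proof
    fix x assume "x \<in> {a \<otimes> j | j. j \<in> J}"
    then obtain j where j: "j \<in> J" and x: "x = a \<otimes> j" by auto
    have "x = a \<oplus> lam C a j" using mult_lam[OF a, of j] j Jf x by auto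
    moreover have "lam C a j \<in> J" using id_lam[OF J, of a j] a j by auto
    ultimately show "x \<in> qcoset C J a" unfolding qcoset_def by blast
  qed
qed

lemma q_add[simp]: "a \<in> carrier C \<Longrightarrow> b \<in> carrier C \<Longrightarrow>
   set_add C (qcoset C J a) (qcoset C J b) = qcoset C J (a \<oplus> b)"
proof
  assume a: "a \<in> carrier C" and b: "b \<in> carrier C"
  show "set_add C (qcoset C J a) (qcoset C J b) \<subseteq> qcoset C J (a \<oplus> b)"
  proof
    fix x assume "x \<in> set_add C (qcoset C J a) (qcoset C J b)"
    then obtain j j' where j: "j \<in> J" and j': "j' \<in> J" and x: "x = (a \<oplus> j) \<oplus> (b \<oplus> j')"
      unfolding set_add_def qcoset_def by auto
    have jc: "j \<in> carrier C" "j' \<in> carrier C" using j j' Jf by auto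
    define k where "k = \<ominus> b \<oplus> (j \<oplus> \<ominus> \<ominus> b)"
    have k: "k \<in> J" using id_aconj[OF J, of "\<ominus> b" j] b j unfolding k_def by simp
    have "x = a \<oplus> b \<oplus> (k \<oplus> j')" using a b jc x by (simp add: k_def)
    moreover have "k \<oplus> j' \<in> J" using k j' Jf by auto
    ultimately show "x \<in> qcoset C J (a \<oplus> b)" unfolding qcoset_def by blast
  qed
  show "qcoset C J (a \<oplus> b) \<subseteq> set_add C (qcoset C J a) (qcoset C J b)"
  proof
    fix x assume "x \<in> qcoset C J (a \<oplus> b)"
    then obtain j where j: "j \<in> J" and x: "x = a \<oplus> b \<oplus> j" unfolding qcoset_def by auto
    have "x = (a \<oplus> \<zero>) \<oplus> (b \<oplus> j)" using a b j Jf x by auto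
    moreover have "a \<oplus> \<zero> \<in> qcoset C J a" using Jf unfolding qcoset_def by blast
    moreover have "b \<oplus> j \<in> qcoset C J b" using j unfolding qcoset_def by blast
    ultimately show "x \<in> set_add C (qcoset C J a) (qcoset C J b)" unfolding set_add_def by blast
  qed
qed

lemma q_mult[simp]: "a \<in> carrier C \<Longrightarrow> b \<in> carrier C \<Longrightarrow>
   Defs.set_mult C (qcoset C J a) (qcoset C J b) = qcoset C J (a \<otimes> b)"
proof -
  assume a: "a \<in> carrier C" and b: "b \<in> carrier C"
  have ab: "a \<otimes> b \<in> carrier C" using a b by simp
  show ?thesis unfolding qc_mult[OF a] qc_mult[OF b] qc_mult[OF ab]
  proof
    show "Defs.set_mult C {a \<otimes> j |j. j \<in> J} {b \<otimes> j |j. j \<in> J} \<subseteq> {a \<otimes> b \<otimes> j |j. j \<in> J}"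
    proof
      fix x assume "x \<in> Defs.set_mult C {a \<otimes> j |j. j \<in> J} {b \<otimes> j |j. j \<in> J}"
      then obtain j j' where j: "j \<in> J" and j': "j' \<in> J" and x: "x = (a \<otimes> j) \<otimes> (b \<otimes> j')"
        unfolding Defs.set_mult_def by auto
      have jc: "j \<in> carrier C" "j' \<in> carrier C" using j j' Jf by auto
      define k where "k = inv b \<otimes> j \<otimes> inv (inv b)"
      have k: "k \<in> J" using id_mconj[OF J, of "inv b" j] b j unfolding k_def by simp
      have rc: "b \<otimes> (inv b \<otimes> y) = y" if "y \<in> carrier C" for y
        using b that by (simp add: G.m_assoc[symmetric])
      have "x = a \<otimes> b \<otimes> (k \<otimes> j')" using a b jc x by (simp add: k_def G.m_assoc rc)
      moreover have "k \<otimes> j' \<in> J" using k j' Jf by auto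
      ultimately show "x \<in> {a \<otimes> b \<otimes> j |j. j \<in> J}" by blast
    qed
    show "{a \<otimes> b \<otimes> j |j. j \<in> J} \<subseteq> Defs.set_mult C {a \<otimes> j |j. j \<in> J} {b \<otimes> j |j. j \<in> J}"
    proof
      fix x assume "x \<in> {a \<otimes> b \<otimes> j |j. j \<in> J}"
      then obtain j where j: "j \<in> J" and x: "x = a \<otimes> b \<otimes> j" by auto
      have jc: "j \<in> carrier C" using j Jf by auto
      have "x = (a \<otimes> \<one>) \<otimes> (b \<otimes> j)" using a b jc x by (simp add: G.m_assoc)
      moreover have "\<one> \<in> J" using Jf one_eq_zero by simp
      ultimately show "x \<in> Defs.set_mult C {a \<otimes> j |j. j \<in> J} {b \<otimes> j |j. j \<in> J}"
        unfolding Defs.set_mult_def using j by blast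
    qed
  qed
qed

lemma q_zero: "qcoset C J \<zero> = J"
  unfolding qcoset_def using Jf(1) by (auto) (metis a_lz subsetD)

lemma quotient_skew:
  assumes g1: "group (quotient_brace C J)" and g2: "group (add_group (quotient_brace C J))"
  shows "skew_brace (quotient_brace C J)"
proof -
  let ?Q = "quotient_brace C J"
  interpret QA: group "add_group ?Q" by (rule g2)
  have qinv: "add_inv ?Q (qcoset C J a) = qcoset C J (\<ominus> a)" if a: "a \<in> carrier C" for a
  proof -
    have "inv\<^bsub>add_group ?Q\<^esub> (qcoset C J a) = qcoset C J (\<ominus> a)"
      using a by (intro QA.inv_equality) (auto simp: quotient_brace_def q_zero)
    then show ?thesis by (simp add: add_inv_def)
  qed
  have "mult ?Q X (add ?Q Y Z) = add ?Q (add ?Q (mult ?Q X Y) (add_inv ?Q X)) (mult ?Q X Z)"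
    if X: "X \<in> carrier ?Q" and Y: "Y \<in> carrier ?Q" and Z: "Z \<in> carrier ?Q" for X Y Z
  proof -
    obtain a b c where a: "a \<in> carrier C" and b: "b \<in> carrier C" and c: "c \<in> carrier C"
      and e: "X = qcoset C J a" "Y = qcoset C J b" "Z = qcoset C J c"
      using X Y Z unfolding quotient_brace_def by auto
    show ?thesis using a b c unfolding e qinv[OF a]
      by (simp add: quotient_brace_def law)
  qed
  then show ?thesis unfolding skew_brace_def using g1 g2 by blast
qed

end

end

theorem lemma4p12:
  fixes B :: "('a, 'b) brace_scheme" and I J :: "'a set"
  assumes "skew_brace B"
    and "chief_factor B I J"
    and "abelian_brace ((quotient_brace B J)\<lparr>carrier := qsub B I J\<rparr>)"
  shows "(frattini_chief_factor B I J \<or> complemented_chief_factor B I J) \<and>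
         (finite (carrier B) \<longrightarrow>
            (\<forall>T. is_complement B I J T \<longrightarrow> maximal_subbrace (quotient_brace B J) T))"
proof -
  interpret Bs: sb B by (rule sb.intro) (rule assms(1))
  let ?Q = "quotient_brace B J"
  let ?N = "qsub B I J"
  have J: "brace_ideal B J" and NQ: "brace_ideal ?Q ?N" and nz: "?N \<noteq> {zero ?Q}"
    and minl: "\<forall>K. brace_ideal ?Q K \<and> K \<subseteq> ?N \<and> K \<noteq> {zero ?Q} \<longrightarrow> K = ?N"
    using assms(2) unfolding chief_factor_def by auto
  have g1: "group ?Q" and g2: "group (add_group ?Q)"
    using NQ unfolding brace_ideal_def normal_def by auto
  have sQ: "skew_brace ?Q" by (rule Bs.quotient_skew[OF J g1 g2])
  interpret Qs: sb ?Q by (rule sb.intro) (rule sQ)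
  have ab: "\<forall>x\<in>?N. \<forall>y\<in>?N. mult ?Q x y = add ?Q x y \<and> add ?Q x y = add ?Q y x"
    using assms(3) unfolding abelian_brace_def by simp
  have P1: "?N \<subseteq> frattini ?Q \<or> (\<exists>T. subbrace ?Q T \<and> carrier ?Q = Defs.set_mult ?Q ?N T \<and>
           carrier ?Q = set_add ?Q ?N T \<and> ?N \<inter> T = {zero ?Q})"
    by (rule Qs.main_abs1[OF NQ nz minl ab])
  have "frattini_chief_factor B I J \<or> complemented_chief_factor B I J"
    using P1 assms(2) unfolding frattini_chief_factor_def complemented_chief_factor_def
      is_complement_def by blast
  moreover have "\<forall>T. is_complement B I J T \<longrightarrow> maximal_subbrace ?Q T"
    using Qs.main_abs2[OF NQ nz minl ab] unfolding is_complement_def by blast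
  ultimately show ?thesis by blast
qed

end
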